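(* The following is a deductive theorem of impredicative second-order logic, for one-place predicates $P_1,P_2$ and two-place relations $\varepsilon_1,\varepsilon_2$: $$\big(\mathsf{LT}(P_1,\varepsilon_1)\wedge \Sigma x\,P_1(x)\wedge\mathsf{LT}(P_2,\varepsilon_2)\wedge\Sigma x\,P_2(x)\big)\to\exists R\Big(\forall v\forall y(R(v,y)\to(P_1(v)\wedge P_2(y)))\wedge\forall v(P_1(v)\to\exists! y\,R(v,y))\wedge\forall y(P_2(y)\to\exists! v\,R(v,y))\wedge\forall v\forall y\forall x\forall z((R(v,y)\wedge R(x,z))\to(v\,\varepsilon_1\,x\leftrightarrow y\,\varepsilon_2\,z))\Big).$$
   Context: For a predicate $P$ and relation $\varepsilon$, define $a\subseteq_\varepsilon b$ as $\forall x(x\,\varepsilon\,a\to x\,\varepsilon\,b)$; $b=\mathrm{pot}_\varepsilon(a)$ as $\forall x(x\,\varepsilon\,b\leftrightarrow\exists c(x\subseteq_\varepsilon c\wedge c\,\varepsilon\,a))$; $h$ is an $\varepsilon$-history iff for every $x$ with $x\,\varepsilon\,h$, $x=\mathrm{pot}_\varepsilon(x\cap_\varepsilon h)$ (where $x\cap_\varepsilon h$ is the $\varepsilon$-set of things $\varepsilon$-in both); $s$ is an $\varepsilon$-level iff $s=\mathrm{pot}_\varepsilon(h)$ for some $\varepsilon$-history $h$. Then $\mathsf{LT}(P,\varepsilon)$ is the conjunction of: (i) $\forall a\forall b((P(a)\wedge P(b)\wedge\forall x(x\,\varepsilon\,a\leftrightarrow x\,\varepsilon\,b))\to a=b)$;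 (ii) $\forall F\forall a(P(a)\to\exists b(P(b)\wedge\forall x(x\,\varepsilon\,b\leftrightarrow(F(x)\wedge x\,\varepsilon\,a))))$; (iii) $\forall a(P(a)\to\exists s(s\text{ is an }\varepsilon\text{-level}\wedge a\subseteq_\varepsilon s))$; (iv) $\forall x\forall y(x\,\varepsilon\,y\to(P(x)\wedge P(y)))$. For a formula $\Phi$, $\Sigma x\,\Phi(x)$ abbreviates $\exists P(\forall x\,\Phi(P(x))\wedge\forall y(\Phi(y)\to\exists!x\,P(x)=y))$, where $P$ is a second-order function variable (a bijection between the universe and the $\Phi$s). *)

theory Defs
  imports Main
begin

text \<open>The universe of first-order quantifiers is a type 'a; second-order quantifiers
range over all predicates/relations/functions on 'a (standard semantics).
The membership relation is written eps x y, meaning x eps y.\<close>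

definition esub :: "('a \<Rightarrow> 'a \<Rightarrow> bool) \<Rightarrow> 'a \<Rightarrow> 'a \<Rightarrow> bool" where
  "esub eps a b \<longleftrightarrow> (\<forall>x. eps x a \<longrightarrow> eps x b)"

text \<open>is_pot eps b A: b = pot(A), where A is given by a condition on the
elements c (e.g. A c = eps c a, or A c = eps c x \<and> eps c h for x \<inter> h).\<close>
definition is_pot :: "('a \<Rightarrow> 'a \<Rightarrow> bool) \<Rightarrow> 'a \<Rightarrow> ('a \<Rightarrow> bool) \<Rightarrow> bool" where
  "is_pot eps b A \<longleftrightarrow> (\<forall>x. eps x b \<longleftrightarrow> (\<exists>c. esub eps x c \<and> A c))"

definition is_history :: "('a \<Rightarrow> 'a \<Rightarrow> bool) \<Rightarrow> 'a \<Rightarrow> bool" where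
  "is_history eps h \<longleftrightarrow> (\<forall>x. eps x h \<longrightarrow> is_pot eps x (\<lambda>c. eps c x \<and> eps c h))"

definition is_level :: "('a \<Rightarrow> 'a \<Rightarrow> bool) \<Rightarrow> 'a \<Rightarrow> bool" where
  "is_level eps s \<longleftrightarrow> (\<exists>h. is_history eps h \<and> is_pot eps s (\<lambda>c. eps c h))"

definition LT :: "('a \<Rightarrow> bool) \<Rightarrow> ('a \<Rightarrow> 'a \<Rightarrow> bool) \<Rightarrow> bool" where
  "LT P eps \<longleftrightarrow>
     (\<forall>a b. P a \<and> P b \<and> (\<forall>x. eps x a \<longleftrightarrow> eps x b) \<longrightarrow> a = b) \<and>
     (\<forall>F a. P a \<longrightarrow> (\<exists>b. P b \<and> (\<forall>x. eps x b \<longleftrightarrow> (F x \<and> eps x a)))) \<and>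
     (\<forall>a. P a \<longrightarrow> (\<exists>s. is_level eps s \<and> esub eps a s)) \<and>
     (\<forall>x y. eps x y \<longrightarrow> P x \<and> P y)"

definition Sigma_pred :: "('a \<Rightarrow> bool) \<Rightarrow> bool" where
  "Sigma_pred Phi \<longleftrightarrow> (\<exists>f :: 'a \<Rightarrow> 'a. (\<forall>x. Phi (f x)) \<and> (\<forall>y. Phi y \<longrightarrow> (\<exists>!x. f x = y)))"

end

theory Submission
  imports Defs
begin


lemma is_pot_cong: "(\<And>c. A c \<longleftrightarrow> B c) \<Longrightarrow> is_pot e b A \<longleftrightarrow> is_pot e b B"
  by (simp add: is_pot_def)

lemma LT_univ:
  assumes "LT P e" "Sigma_pred P" shows "\<forall>x. P x"
proof (rule ccontr)
  assume "\<not> (\<forall>x. P x)" then obtain x0 where nx: "\<not> P x0" by blast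
  have f: "\<forall>x y. e x y \<longrightarrow> P x \<and> P y" using assms(1) unfolding LT_def by blast
  have empty: "\<forall>a z. P a \<longrightarrow> \<not> e z a"
  proof (intro allI impI notI)
    fix a z assume "P a" "e z a"
    from assms(1) \<open>P a\<close> obtain s where "is_level e s" "esub e a s" unfolding LT_def by blast
    then obtain h where hp: "is_pot e s (\<lambda>c. e c h)" unfolding is_level_def by blast
    have "e z s" using \<open>esub e a s\<close> \<open>e z a\<close> by (simp add: esub_def)
    then obtain c where "e c h" using hp unfolding is_pot_def by blast
    have "esub e x0 c" using f nx unfolding esub_def by blast
    hence "e x0 s" using hp \<open>e c h\<close> unfolding is_pot_def by blast
    thus False using f nx by blast
  qed
  from assms(2) obtain g :: "'a \<Rightarrow> 'a" where g: "\<forall>x. P (g x)" "\<forall>y. P y \<longrightarrow> (\<exists>!x. g x = y)"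
    unfolding Sigma_pred_def by blast
  have ext: "\<forall>a b. P a \<and> P b \<and> (\<forall>x. e x a \<longleftrightarrow> e x b) \<longrightarrow> a = b"
    using assms(1) unfolding LT_def by blast
  have "g x0 = g (g x0)" using ext g(1) empty by blast
  hence "x0 = g x0" using g by metis
  thus False using g(1) nx by metis
qed

locale lt =
  fixes e :: "'a \<Rightarrow> 'a \<Rightarrow> bool"
  assumes ext: "\<And>a b. (\<And>x. e x a \<longleftrightarrow> e x b) \<Longrightarrow> a = b"
  and sep: "\<And>F a. \<exists>b. \<forall>x. e x b \<longleftrightarrow> F x \<and> e x a"
  and lev: "\<And>a. \<exists>s. is_level e s \<and> esub e a s"
begin

lemma pot_wf:
  assumes "S s0" "\<And>c. S c \<Longrightarrow> \<exists>A. is_pot e c A"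
  shows "\<exists>m. S m \<and> (\<forall>d. S d \<longrightarrow> \<not> e d m)"
proof (rule ccontr)
  assume "\<not> ?thesis"
  hence nm: "\<And>m. S m \<Longrightarrow> \<exists>d. S d \<and> e d m" by blast
  obtain r where r: "\<forall>x. e x r \<longleftrightarrow> ((\<forall>c. S c \<longrightarrow> e x c) \<and> \<not> e x x) \<and> e x s0"
    using sep[of "\<lambda>x. (\<forall>c. S c \<longrightarrow> e x c) \<and> \<not> e x x" s0] by blast
  have all: "e r c" if Sc: "S c" for c
  proof -
    obtain d where d: "S d" "e d c" using nm Sc by blast
    obtain A where A: "is_pot e c A" using assms(2) Sc by blast
    then obtain c' where c': "esub e d c'" "A c'" using d(2) unfolding is_pot_def by blast
    have "esub e r d" using r d(1) unfolding esub_def by blast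
    hence "esub e r c'" using c'(1) unfolding esub_def by blast
    thus ?thesis using A c'(2) unfolding is_pot_def by blast
  qed
  have "e r s0" using all assms(1) .
  thus False using r all by blast
qed

lemma pot_induct:
  assumes "\<And>c. S c \<Longrightarrow> \<exists>A. is_pot e c A"
    and "\<And>c. S c \<Longrightarrow> (\<And>d. S d \<Longrightarrow> e d c \<Longrightarrow> Q d) \<Longrightarrow> Q c"
    and "S c"
  shows "Q c"
proof (rule ccontr)
  assume "\<not> Q c"
  then obtain m where m: "S m" "\<not> Q m" "\<forall>d. S d \<and> \<not> Q d \<longrightarrow> \<not> e d m"
    using pot_wf[of "\<lambda>x. S x \<and> \<not> Q x" c] assms by blast
  thus False using assms(2)[of m] by blast
qed

lemma hist_sub0:
  assumes h: "is_history e h" "e c h" shows "\<forall>d. e d c \<longrightarrow> e d h \<longrightarrow> esub e d c"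
proof (rule pot_induct[where S="\<lambda>c. e c h" and Q="\<lambda>c. \<forall>d. e d c \<longrightarrow> e d h \<longrightarrow> esub e d c"])
  fix c assume "e c h" thus "\<exists>A. is_pot e c A" using h unfolding is_history_def by blast
next
  show "e c h" by (rule h(2))
next
  fix c assume c: "e c h" and IH: "\<And>d. e d h \<Longrightarrow> e d c \<Longrightarrow> \<forall>x. e x d \<longrightarrow> e x h \<longrightarrow> esub e x d"
  show "\<forall>d. e d c \<longrightarrow> e d h \<longrightarrow> esub e d c"
  proof (intro allI impI)
    fix d assume d: "e d c" "e d h"
    show "esub e d c" unfolding esub_def
    proof (intro allI impI)
      fix z assume "e z d"
      have "is_pot e d (\<lambda>x. e x d \<and> e x h)" using h d unfolding is_history_def by blast
      then obtain f where f: "esub e z f" "e f d" "e f h" using \<open>e z d\<close> unfolding is_pot_def by blast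
      have "esub e f d" using IH[OF d(2,1)] f by blast
      hence "esub e z d" using f(1) unfolding esub_def by blast
      moreover have "is_pot e c (\<lambda>x. e x c \<and> e x h)" using h c unfolding is_history_def by blast
      ultimately show "e z c" using d unfolding is_pot_def by blast
    qed
  qed
qed

lemma hist_sub: "is_history e h \<Longrightarrow> e c h \<Longrightarrow> e d c \<Longrightarrow> e d h \<Longrightarrow> esub e d c"
  using hist_sub0 by blast

lemma hist_trans:
  assumes h: "is_history e h" "e c h" "e y c" "e z y" shows "e z c"
proof -
  have "is_pot e c (\<lambda>x. e x c \<and> e x h)" using h unfolding is_history_def by blast
  then obtain d where d: "esub e y d" "e d c" "e d h" using h(3) unfolding is_pot_def by blast
  have "esub e d c" using hist_sub[OF h(1,2) d(2,3)] .
  thus ?thesis using d(1) h(4) unfolding esub_def by blast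
qed

lemma hist_elem_level:
  assumes h: "is_history e h" "e c h" shows "is_level e c"
proof -
  obtain k where k: "\<forall>x. e x k \<longleftrightarrow> e x h \<and> e x c" using sep[of "\<lambda>x. e x h" c] by blast
  have "is_history e k" unfolding is_history_def
  proof (intro allI impI)
    fix y assume "e y k"
    hence y: "e y h" "e y c" using k by auto
    have "is_pot e y (\<lambda>d. e d y \<and> e d h)" using h(1) y(1) unfolding is_history_def by blast
    moreover have "(\<lambda>d. e d y \<and> e d h) = (\<lambda>d. e d y \<and> e d k)"
      using k hist_trans[OF h y(2)] by blast
    ultimately show "is_pot e y (\<lambda>d. e d y \<and> e d k)" by simp
  qed
  moreover have "is_pot e c (\<lambda>d. e d k)"
  proof -
    have "is_pot e c (\<lambda>d. e d c \<and> e d h)" using h unfolding is_history_def by blast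
    moreover have "(\<lambda>d. e d c \<and> e d h) = (\<lambda>d. e d k)" using k by blast
    ultimately show ?thesis by simp
  qed
  ultimately show ?thesis unfolding is_level_def by blast
qed

lemma level_pot: "is_level e s \<Longrightarrow> \<exists>A. is_pot e s A"
  unfolding is_level_def by blast

lemma level_sub: assumes "is_level e s" "e y s" "esub e z y" shows "e z s"
proof -
  obtain h where h: "is_history e h" "is_pot e s (\<lambda>c. e c h)" using assms(1) unfolding is_level_def by blast
  then obtain c where "esub e y c" "e c h" using assms(2) unfolding is_pot_def by blast
  thus ?thesis using h(2) assms(3) unfolding is_pot_def esub_def by blast
qed

lemma level_trans: assumes "is_level e s" "e y s" "e z y" shows "e z s"
proof -
  obtain h where h: "is_history e h" "is_pot e s (\<lambda>c. e c h)" using assms(1) unfolding is_level_def by blast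
  then obtain c where c: "esub e y c" "e c h" using assms(2) unfolding is_pot_def by blast
  have "e z c" using c(1) assms(3) unfolding esub_def by blast
  have "is_pot e c (\<lambda>x. e x c \<and> e x h)" using h c unfolding is_history_def by blast
  then obtain d where "esub e z d" "e d h" using \<open>e z c\<close> unfolding is_pot_def by blast
  thus ?thesis using h(2) unfolding is_pot_def by blast
qed

lemma level_elem: assumes "is_level e s" "e x s"
  shows "\<exists>u. is_level e u \<and> e u s \<and> esub e x u"
proof -
  obtain h where h: "is_history e h" "is_pot e s (\<lambda>c. e c h)" using assms(1) unfolding is_level_def by blast
  then obtain c where c: "esub e x c" "e c h" using assms(2) unfolding is_pot_def by blast
  have "e c s" using h(2) c(2) unfolding is_pot_def esub_def by blast
  thus ?thesis using hist_elem_level[OF h(1) c(2)] c by blast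
qed

lemma tri0: assumes "is_level e s" shows "\<forall>t. is_level e t \<longrightarrow> e s t \<or> s = t \<or> e t s"
proof (rule pot_induct[where S="is_level e" and Q="\<lambda>s. \<forall>t. is_level e t \<longrightarrow> e s t \<or> s = t \<or> e t s"])
  fix c assume "is_level e c" thus "\<exists>A. is_pot e c A" by (rule level_pot)
next
  show "is_level e s" by (rule assms)
next
  fix s assume s: "is_level e s" and IHs: "\<And>d. is_level e d \<Longrightarrow> e d s \<Longrightarrow> \<forall>t. is_level e t \<longrightarrow> e d t \<or> d = t \<or> e t d"
  show "\<forall>t. is_level e t \<longrightarrow> e s t \<or> s = t \<or> e t s"
  proof (intro allI impI)
    fix t0 assume "is_level e t0"
    show "e s t0 \<or> s = t0 \<or> e t0 s"
    proof (rule pot_induct[where S="is_level e" and Q="\<lambda>t. e s t \<or> s = t \<or> e t s"])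
      fix c assume "is_level e c" thus "\<exists>A. is_pot e c A" by (rule level_pot)
    next
      show "is_level e t0" by fact
    next
      fix t assume t: "is_level e t" and IHt: "\<And>d. is_level e d \<Longrightarrow> e d t \<Longrightarrow> e s d \<or> s = d \<or> e d s"
      show "e s t \<or> s = t \<or> e t s"
      proof (rule ccontr)
        assume n: "\<not> (e s t \<or> s = t \<or> e t s)"
        have "s = t"
        proof (rule ext)
          fix x
          have A: "e u t" if "is_level e u" "e u s" for u
            proof -
            have "e u t \<or> u = t \<or> e t u" using IHs[OF that] t by blast
            thus ?thesis using n level_trans[OF s that(2)] that(2) by blast
          qed
          have B: "e u s" if "is_level e u" "e u t" for u
            using IHt[OF that] n level_trans[OF t that(2)] that(2) by metis
          show "e x s \<longleftrightarrow> e x t"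
          proof
            assume "e x s"
            then obtain u where "is_level e u" "e u s" "esub e x u" using level_elem[OF s] by blast
            thus "e x t" using A level_sub[OF t] by blast
          next
            assume "e x t"
            then obtain u where "is_level e u" "e u t" "esub e x u" using level_elem[OF t] by blast
            thus "e x s" using B level_sub[OF s] by blast
          qed
        qed
        thus False using n by blast
      qed
    qed
  qed
qed

lemma tri: "is_level e s \<Longrightarrow> is_level e t \<Longrightarrow> e s t \<or> s = t \<or> e t s"
  using tri0 by blast

end


inductive bis :: "('a \<Rightarrow> 'a \<Rightarrow> bool) \<Rightarrow> ('a \<Rightarrow> 'a \<Rightarrow> bool) \<Rightarrow> 'a \<Rightarrow> 'a \<Rightarrow> bool"
  for e1 e2 where
  bisI: "(\<forall>x. e1 x v \<longrightarrow> (\<exists>z. e2 z y \<and> bis e1 e2 x z)) \<Longrightarrow>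
   (\<forall>z. e2 z y \<longrightarrow> (\<exists>x. e1 x v \<and> bis e1 e2 x z)) \<Longrightarrow> bis e1 e2 v y"

lemma bis_conv1: "bis e1 e2 v y \<Longrightarrow> bis e2 e1 y v"
  by (induction rule: bis.induct) (auto intro!: bis.intros)

lemma bis_conv: "bis e1 e2 v y \<longleftrightarrow> bis e2 e1 y v"
  using bis_conv1 by metis

lemma bis_D1: "bis e1 e2 v y \<Longrightarrow> e1 x v \<Longrightarrow> \<exists>z. e2 z y \<and> bis e1 e2 x z"
  by (auto elim: bis.cases)

lemma bis_D2: "bis e1 e2 v y \<Longrightarrow> e2 z y \<Longrightarrow> \<exists>x. e1 x v \<and> bis e1 e2 x z"
  by (auto elim: bis.cases)

locale two = M1: lt e1 + M2: lt e2 for e1 e2 :: "'a \<Rightarrow> 'a \<Rightarrow> bool"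
begin

lemma swap: "two e2 e1" by (simp add: two_def M1.lt_axioms M2.lt_axioms)

lemma R_fun: "bis e1 e2 v y \<Longrightarrow> bis e1 e2 v y' \<Longrightarrow> y = y'"
proof (induction arbitrary: y' rule: bis.induct)
  case (bisI v y)
  show ?case
  proof (rule M2.ext)
    fix z show "e2 z y \<longleftrightarrow> e2 z y'"
    proof
      assume "e2 z y"
      then obtain x where x: "e1 x v" "bis e1 e2 x z" "\<forall>z'. bis e1 e2 x z' \<longrightarrow> z = z'" using bisI(2) by blast
      obtain z' where "e2 z' y'" "bis e1 e2 x z'" using bis_D1[OF bisI(3) x(1)] by blast
      thus "e2 z y'" using x(3) by blast
    next
      assume "e2 z y'"
      then obtain x where x: "e1 x v" "bis e1 e2 x z" using bis_D2[OF bisI(3)] by blast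
      obtain z' where z': "e2 z' y" "bis e1 e2 x z'" "\<forall>w. bis e1 e2 x w \<longrightarrow> z' = w" using bisI(1) x(1) by blast
      thus "e2 z y" using x(2) by blast
    qed
  qed
qed

lemma R_inj: "bis e1 e2 v y \<Longrightarrow> bis e1 e2 v' y \<Longrightarrow> v = v'"
  using two.R_fun[OF swap] bis_conv by metis

lemma R_eps: assumes "bis e1 e2 v y" "bis e1 e2 x z" shows "e1 v x \<longleftrightarrow> e2 y z"
proof
  assume "e1 v x"
  then obtain w where "e2 w z" "bis e1 e2 v w" using bis_D1[OF assms(2)] by blast
  thus "e2 y z" using R_fun assms(1) by blast
next
  assume "e2 y z"
  then obtain w where "e1 w x" "bis e1 e2 w y" using bis_D2[OF assms(2)] by blast
  thus "e1 v x" using R_inj assms(1) by blast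
qed

lemma R_sub: assumes "bis e1 e2 s t" "esub e1 v s" shows "\<exists>y. bis e1 e2 v y \<and> esub e2 y t"
proof -
  obtain b where b: "\<forall>z. e2 z b \<longleftrightarrow> (\<exists>x. e1 x v \<and> bis e1 e2 x z) \<and> e2 z t"
    using M2.sep[of "\<lambda>z. \<exists>x. e1 x v \<and> bis e1 e2 x z" t] by blast
  have "bis e1 e2 v b"
  proof (rule bisI)
    show "\<forall>x. e1 x v \<longrightarrow> (\<exists>z. e2 z b \<and> bis e1 e2 x z)"
    proof (intro allI impI)
      fix x assume "e1 x v"
      hence "e1 x s" using assms(2) unfolding esub_def by blast
      then obtain z where "e2 z t" "bis e1 e2 x z" using bis_D1[OF assms(1)] by blast
      thus "\<exists>z. e2 z b \<and> bis e1 e2 x z" using b \<open>e1 x v\<close> by blast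
    qed
    show "\<forall>z. e2 z b \<longrightarrow> (\<exists>x. e1 x v \<and> bis e1 e2 x z)" using b by blast
  qed
  moreover have "esub e2 b t" using b unfolding esub_def by blast
  ultimately show ?thesis by blast
qed

lemma R_esub: assumes "bis e1 e2 x y" "bis e1 e2 c d" "esub e1 x c" shows "esub e2 y d"
  unfolding esub_def
proof (intro allI impI)
  fix w assume "e2 w y"
  then obtain u where "e1 u x" "bis e1 e2 u w" using bis_D2[OF assms(1)] by blast
  hence "e1 u c" using assms(3) unfolding esub_def by blast
  thus "e2 w d" using R_eps[OF \<open>bis e1 e2 u w\<close> assms(2)] by blast
qed

lemma R_pot:
  assumes "bis e1 e2 a a'"
    and AB: "\<And>c c'. bis e1 e2 c c' \<Longrightarrow> A c \<longleftrightarrow> B c'"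
    and Ad: "\<And>c. A c \<Longrightarrow> \<exists>c'. bis e1 e2 c c'"
    and Bd: "\<And>c'. B c' \<Longrightarrow> \<exists>c. bis e1 e2 c c'"
    and p: "is_pot e1 a A"
  shows "is_pot e2 a' B"
  unfolding is_pot_def
proof (intro allI iffI)
  fix y assume "e2 y a'"
  then obtain x where x: "e1 x a" "bis e1 e2 x y" using bis_D2[OF assms(1)] by blast
  then obtain c where c: "esub e1 x c" "A c" using p unfolding is_pot_def by blast
  then obtain c' where c': "bis e1 e2 c c'" using Ad by blast
  have "esub e2 y c'" using R_esub[OF x(2) c' c(1)] .
  moreover have "B c'" using AB[OF c'] c(2) by blast
  ultimately show "\<exists>c. esub e2 y c \<and> B c" by blast
next
  fix y assume "\<exists>c. esub e2 y c \<and> B c"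
  then obtain c' where c': "esub e2 y c'" "B c'" by blast
  then obtain c where c: "bis e1 e2 c c'" using Bd by blast
  have "bis e2 e1 c' c" using c bis_conv by metis
  then obtain x where x: "bis e2 e1 y x" "esub e1 x c" using two.R_sub[OF swap _ c'(1)] by blast
  have x': "bis e1 e2 x y" using x(1) bis_conv by metis
  have "A c" using AB[OF c] c'(2) by blast
  hence "e1 x a" using p x(2) unfolding is_pot_def by blast
  then obtain z where "e2 z a'" "bis e1 e2 x z" using bis_D1[OF assms(1)] by blast
  thus "e2 y a'" using R_fun x' by blast
qed

lemma R_level: assumes "bis e1 e2 s t" "is_level e1 s" shows "is_level e2 t"
proof -
  obtain h where h: "is_history e1 h" "is_pot e1 s (\<lambda>c. e1 c h)"
    using assms(2) unfolding is_level_def by blast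
  obtain h' where h': "\<forall>x. e1 x h' \<longleftrightarrow> e1 x h \<and> e1 x s" using M1.sep[of "\<lambda>x. e1 x h" s] by blast
  have hs: "e1 c h \<Longrightarrow> e1 c s" for c using h(2) unfolding is_pot_def esub_def by blast
  have heq: "\<forall>x. e1 x h' \<longleftrightarrow> e1 x h" using h' hs by blast
  have hh': "is_history e1 h'" using h(1) heq unfolding is_history_def by simp
  have ps: "is_pot e1 s (\<lambda>c. e1 c h')" using h(2) heq by simp
  have "esub e1 h' s" using h' unfolding esub_def by blast
  then obtain k where k: "bis e1 e2 h' k" using R_sub[OF assms(1)] by blast
  have "is_pot e2 t (\<lambda>c. e2 c k)"
  proof (rule R_pot[OF assms(1) _ _ _ ps])
    show "bis e1 e2 c c' \<Longrightarrow> e1 c h' \<longleftrightarrow> e2 c' k" for c c' using R_eps k by blast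
    show "e1 c h' \<Longrightarrow> \<exists>c'. bis e1 e2 c c'" for c using bis_D1[OF k] by blast
    show "e2 c' k \<Longrightarrow> \<exists>c. bis e1 e2 c c'" for c' using bis_D2[OF k] by blast
  qed
  moreover have "is_history e2 k" unfolding is_history_def
  proof (intro allI impI)
    fix x' assume "e2 x' k"
    then obtain x where x: "e1 x h'" "bis e1 e2 x x'" using bis_D2[OF k] by blast
    have px: "is_pot e1 x (\<lambda>c. e1 c x \<and> e1 c h')" using hh' x(1) unfolding is_history_def by blast
    show "is_pot e2 x' (\<lambda>c. e2 c x' \<and> e2 c k)"
    proof (rule R_pot[OF x(2) _ _ _ px])
      show "bis e1 e2 c c' \<Longrightarrow> e1 c x \<and> e1 c h' \<longleftrightarrow> e2 c' x' \<and> e2 c' k" for c c'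
        using R_eps k x(2) by blast
      show "e1 c x \<and> e1 c h' \<Longrightarrow> \<exists>c'. bis e1 e2 c c'" for c using bis_D1[OF k] by blast
      show "e2 c' x' \<and> e2 c' k \<Longrightarrow> \<exists>c. bis e1 e2 c c'" for c' using bis_D2[OF k] by blast
    qed
  qed
  ultimately show ?thesis unfolding is_level_def by blast
qed

lemma half:
  assumes s2: "is_level e2 s2" and nr: "\<not> (\<exists>v. bis e1 e2 v s2)"
    and x: "esub e1 x u" "is_level e1 u" and u': "bis e1 e2 u u'"
  shows "\<exists>z. e2 z s2 \<and> bis e1 e2 x z"
proof -
  have lu': "is_level e2 u'" using R_level[OF u' x(2)] .
  have "e2 u' s2"
  proof -
    have "e2 u' s2 \<or> u' = s2 \<or> e2 s2 u'" using M2.tri[OF lu' s2] .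
    moreover have "u' \<noteq> s2" using nr u' by blast
    moreover have "\<not> e2 s2 u'" using bis_D2[OF u'] nr by blast
    ultimately show ?thesis by blast
  qed
  obtain z where z: "bis e1 e2 x z" "esub e2 z u'" using R_sub[OF u' x(1)] by blast
  have "e2 z s2" using M2.level_sub[OF s2 \<open>e2 u' s2\<close> z(2)] .
  thus ?thesis using z by blast
qed

lemma min_nodom:
  assumes "\<not> (\<exists>y. bis e1 e2 v0 y)"
  shows "\<exists>s1. is_level e1 s1 \<and> \<not> (\<exists>y. bis e1 e2 s1 y) \<and>
           (\<forall>u. is_level e1 u \<and> e1 u s1 \<longrightarrow> (\<exists>u'. bis e1 e2 u u'))"
proof -
  obtain s where s: "is_level e1 s" "esub e1 v0 s" using M1.lev by blast
  have "\<not> (\<exists>y. bis e1 e2 s y)" using R_sub s(2) assms by blast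
  then obtain m where "is_level e1 m \<and> \<not> (\<exists>y. bis e1 e2 m y)"
     "\<forall>d. is_level e1 d \<and> \<not> (\<exists>y. bis e1 e2 d y) \<longrightarrow> \<not> e1 d m"
    using M1.pot_wf[of "\<lambda>s. is_level e1 s \<and> \<not> (\<exists>y. bis e1 e2 s y)" s] s(1) M1.level_pot by blast
  thus ?thesis by blast
qed

lemma key: "(\<forall>v. \<exists>y. bis e1 e2 v y) \<or> (\<forall>y. \<exists>v. bis e1 e2 v y)"
proof (rule ccontr)
  assume "\<not> ?thesis"
  then obtain v0 y0 where v0: "\<not> (\<exists>y. bis e1 e2 v0 y)" and y0: "\<not> (\<exists>v. bis e2 e1 y0 v)"
    using bis_conv by metis
  obtain s1 where s1: "is_level e1 s1" "\<not> (\<exists>y. bis e1 e2 s1 y)"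
    "\<forall>u. is_level e1 u \<and> e1 u s1 \<longrightarrow> (\<exists>u'. bis e1 e2 u u')" using min_nodom[OF v0] by blast
  obtain s2 where s2: "is_level e2 s2" "\<not> (\<exists>y. bis e2 e1 s2 y)"
    "\<forall>u. is_level e2 u \<and> e2 u s2 \<longrightarrow> (\<exists>u'. bis e2 e1 u u')" using two.min_nodom[OF swap y0] by blast
  have "bis e1 e2 s1 s2"
  proof (rule bisI)
    show "\<forall>x. e1 x s1 \<longrightarrow> (\<exists>z. e2 z s2 \<and> bis e1 e2 x z)"
    proof (intro allI impI)
      fix x assume "e1 x s1"
      then obtain u where u: "is_level e1 u" "e1 u s1" "esub e1 x u" using M1.level_elem[OF s1(1)] by blast
      then obtain u' where "bis e1 e2 u u'" using s1(3) by blast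
      moreover have "\<not> (\<exists>v. bis e1 e2 v s2)" using s2(2) bis_conv by metis
      ultimately show "\<exists>z. e2 z s2 \<and> bis e1 e2 x z" using half[OF s2(1) _ u(3) u(1)] by blast
    qed
    show "\<forall>z. e2 z s2 \<longrightarrow> (\<exists>x. e1 x s1 \<and> bis e1 e2 x z)"
    proof (intro allI impI)
      fix x assume "e2 x s2"
      then obtain u where u: "is_level e2 u" "e2 u s2" "esub e2 x u" using M2.level_elem[OF s2(1)] by blast
      then obtain u' where "bis e2 e1 u u'" using s2(3) by blast
      moreover have "\<not> (\<exists>v. bis e2 e1 v s1)" using s1(2) bis_conv by metis
      ultimately have "\<exists>z. e1 z s1 \<and> bis e2 e1 x z" using two.half[OF swap s1(1) _ u(3) u(1)] by blast
      thus "\<exists>z. e1 z s1 \<and> bis e1 e2 z x" using bis_conv by metis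
    qed
  qed
  thus False using s1(2) by blast
qed

lemma cantor:
  assumes tot: "\<forall>v. \<exists>y. bis e1 e2 v y" shows "\<forall>y. \<exists>v. bis e1 e2 v y"
proof (rule ccontr)
  assume "\<not> ?thesis"
  then obtain y0 where y0: "\<not> (\<exists>v. bis e2 e1 y0 v)" using bis_conv by metis
  obtain s2 where s2: "is_level e2 s2" "\<not> (\<exists>y. bis e2 e1 s2 y)"
    using two.min_nodom[OF swap y0] by blast
  have nr: "\<not> (\<exists>v. bis e1 e2 v s2)" using s2(2) bis_conv by metis
  have into: "\<exists>z. e2 z s2 \<and> bis e1 e2 x z" for x
  proof -
    obtain u where u: "is_level e1 u" "esub e1 x u" using M1.lev by blast
    obtain u' where "bis e1 e2 u u'" using tot by blast
    thus ?thesis using half[OF s2(1) nr u(2) u(1)] by blast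
  qed
  define G where "G X = (SOME b. \<forall>z. e2 z b \<longleftrightarrow> (\<exists>x\<in>X. bis e1 e2 x z) \<and> e2 z s2)" for X
  have G: "\<forall>z. e2 z (G X) \<longleftrightarrow> (\<exists>x\<in>X. bis e1 e2 x z) \<and> e2 z s2" for X
  proof -
    have "\<exists>b. \<forall>z. e2 z b \<longleftrightarrow> (\<exists>x\<in>X. bis e1 e2 x z) \<and> e2 z s2"
      using M2.sep[of "\<lambda>z. \<exists>x\<in>X. bis e1 e2 x z" s2] by blast
    thus ?thesis unfolding G_def by (rule someI_ex)
  qed
  have sub: "X \<subseteq> Y" if "G X = G Y" for X Y
  proof
    fix x assume "x \<in> X"
    obtain z where z: "e2 z s2" "bis e1 e2 x z" using into by blast
    hence "e2 z (G Y)" using G[of X] that \<open>x \<in> X\<close> by auto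
    then obtain x' where "x' \<in> Y" "bis e1 e2 x' z" using G[of Y] by blast
    thus "x \<in> Y" using R_inj z(2) by blast
  qed
  have "inj G" by (rule injI) (metis sub subset_antisym)
  hence "surj (inv G)" by (rule inj_imp_surj_inv)
  hence "(inv G) ` UNIV = Pow UNIV" by simp
  thus False using Cantors_theorem by blast
qed

lemma total: "(\<forall>v. \<exists>y. bis e1 e2 v y) \<and> (\<forall>y. \<exists>v. bis e1 e2 v y)"
proof -
  have c2: "\<forall>y. \<exists>v. bis e1 e2 v y" if "\<forall>v. \<exists>y. bis e1 e2 v y" using cantor that by blast
  have c1: "\<forall>v. \<exists>y. bis e1 e2 v y" if "\<forall>y. \<exists>v. bis e1 e2 v y"
  proof -
    have "\<forall>v. \<exists>y. bis e2 e1 v y" using that bis_conv by metis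
    hence "\<forall>y. \<exists>v. bis e2 e1 v y" using two.cantor[OF swap] by blast
    thus ?thesis using bis_conv by metis
  qed
  show ?thesis using key c1 c2 by blast
qed

end


lemma LT_lt: assumes "LT P e" "\<forall>x. P x" shows "lt e"
proof -
  have E: "\<forall>a b. P a \<and> P b \<and> (\<forall>x. e x a \<longleftrightarrow> e x b) \<longrightarrow> a = b"
    using assms(1) unfolding LT_def by (rule conjunct1)
  have S: "\<forall>F a. P a \<longrightarrow> (\<exists>b. P b \<and> (\<forall>x. e x b \<longleftrightarrow> (F x \<and> e x a)))"
    using assms(1) unfolding LT_def by (rule conjunct1[OF conjunct2])
  have L: "\<forall>a. P a \<longrightarrow> (\<exists>s. is_level e s \<and> esub e a s)"
    using assms(1) unfolding LT_def by (rule conjunct1[OF conjunct2[OF conjunct2]])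
  show ?thesis
proof
  fix a b :: 'a assume "\<And>x. e x a \<longleftrightarrow> e x b" thus "a = b" using E assms(2) by blast
next
  fix F a show "\<exists>b. \<forall>x. e x b \<longleftrightarrow> F x \<and> e x a" using S assms(2) by blast
next
  fix a show "\<exists>s. is_level e s \<and> esub e a s" using L assms(2) by blast
qed
qed

theorem theorem25:
  fixes P1 P2 :: "'a \<Rightarrow> bool" and eps1 eps2 :: "'a \<Rightarrow> 'a \<Rightarrow> bool"
  shows "(LT P1 eps1 \<and> Sigma_pred P1 \<and> LT P2 eps2 \<and> Sigma_pred P2) \<longrightarrow>
    (\<exists>R :: 'a \<Rightarrow> 'a \<Rightarrow> bool.
       (\<forall>v y. R v y \<longrightarrow> P1 v \<and> P2 y) \<and>
       (\<forall>v. P1 v \<longrightarrow> (\<exists>!y. R v y)) \<and>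
       (\<forall>y. P2 y \<longrightarrow> (\<exists>!v. R v y)) \<and>
       (\<forall>v y x z. R v y \<and> R x z \<longrightarrow> (eps1 v x \<longleftrightarrow> eps2 y z)))"
proof
  assume H: "LT P1 eps1 \<and> Sigma_pred P1 \<and> LT P2 eps2 \<and> Sigma_pred P2"
  have u1: "\<forall>x. P1 x" using LT_univ H by blast
  have u2: "\<forall>x. P2 x" using LT_univ H by blast
  have T: "two eps1 eps2" unfolding two_def using LT_lt H u1 u2 by blast
  show "\<exists>R :: 'a \<Rightarrow> 'a \<Rightarrow> bool.
       (\<forall>v y. R v y \<longrightarrow> P1 v \<and> P2 y) \<and>
       (\<forall>v. P1 v \<longrightarrow> (\<exists>!y. R v y)) \<and>
       (\<forall>y. P2 y \<longrightarrow> (\<exists>!v. R v y)) \<and>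
       (\<forall>v y x z. R v y \<and> R x z \<longrightarrow> (eps1 v x \<longleftrightarrow> eps2 y z))"
  proof (intro exI conjI)
    show "\<forall>v y. bis eps1 eps2 v y \<longrightarrow> P1 v \<and> P2 y" using u1 u2 by blast
    show "\<forall>v. P1 v \<longrightarrow> (\<exists>!y. bis eps1 eps2 v y)"
      using two.total[OF T] two.R_fun[OF T] by blast
    show "\<forall>y. P2 y \<longrightarrow> (\<exists>!v. bis eps1 eps2 v y)"
      using two.total[OF T] two.R_inj[OF T] by blast
    show "\<forall>v y x z. bis eps1 eps2 v y \<and> bis eps1 eps2 x z \<longrightarrow> (eps1 v x \<longleftrightarrow> eps2 y z)"
      using two.R_eps[OF T] by blast
  qed
qed

end
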